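(* Let $b\in\mathbb{R}^n$, $c\in\mathbb{R}^m$, $D\in\mathbb{R}^{m\times n}$ surjective, $K\in\{0,\ldots,m-1\}$, $\gamma>0$, and let $x^*$ be a d-stationary point of $$\min_{x\in\mathbb{R}^n}\ \tfrac12\|b-x\|_2^2+\gamma T_{K,m,1}(Dx-c).$$ Let $\overline{x}$ be any point with $D\overline{x}=c$. If $\gamma>\|b-\overline{x}\|_2/\sigma_{\min}(D)$, then $T_{K,m,1}(Dx^*-c)=0$.
   Context: $T_{K,m,1}(z)$ for $z\in\mathbb{R}^m$ is the sum of the $m-K$ smallest values among $|z_1|,\ldots,|z_m|$. $\sigma_{\min}(D)$ is the smallest nonzero singular value of $D$. A point is d-stationary if the directional derivative of the objective there is $\ge0$ in every direction. *)

theory Defs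
  imports "HOL-Analysis.Analysis" "HOL-Library.Multiset"
begin

definition trimmed_l1 :: "nat \<Rightarrow> real ^ 'm \<Rightarrow> real" where
  "trimmed_l1 K z = sum_list (take (CARD('m) - K)
      (sorted_list_of_multiset (image_mset (\<lambda>i. \<bar>z $ i\<bar>) (mset_set (UNIV :: 'm set)))))"

definition sigma_min :: "real ^ 'n ^ 'm \<Rightarrow> real" where
  "sigma_min D = sqrt (Min {e. e \<noteq> 0 \<and> (\<exists>v. v \<noteq> 0 \<and> (transpose D ** D) *v v = e *\<^sub>R v)})"

definition d_stationary :: "('a::real_normed_vector \<Rightarrow> real) \<Rightarrow> 'a \<Rightarrow> bool" where
  "d_stationary F x \<longleftrightarrow> (\<forall>d. \<exists>L. ((\<lambda>t. (F (x + t *\<^sub>R d) - F x) / t) \<longlongrightarrow> L) (at_right 0) \<and> L \<ge> 0)"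

end

theory Submission
  imports Defs
begin


lemma T_repr:
  fixes z :: "real ^ 'm"
  obtains js where "distinct js" "set js = UNIV" "sorted (map (\<lambda>i. \<bar>z$i\<bar>) js)"
    "trimmed_l1 K z = sum_list (take (CARD('m) - K) (map (\<lambda>i. \<bar>z$i\<bar>) js))"
proof -
  define f where "f = (\<lambda>i. \<bar>z$i\<bar>)"
  obtain ls where ls: "distinct ls" "set ls = (UNIV :: 'm set)"
    using finite_distinct_list[of "UNIV :: 'm set"] by auto
  define js where "js = sort_key f ls"
  have m: "mset js = mset ls" unfolding js_def by simp
  have d: "distinct js" using m ls(1) by (metis distinct_count_atmost_1 count_mset_0_iff set_mset_mset)
  have s: "set js = UNIV" using m ls(2) by (metis set_mset_mset)
  have so: "sorted (map f js)" unfolding js_def by simp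
  have "image_mset f (mset_set UNIV) = mset (map f js)"
    using m ls by (metis mset_map mset_set_set)
  hence "sorted_list_of_multiset (image_mset f (mset_set UNIV)) = map f js"
    using so by (metis sorted_list_of_multiset_mset sorted_sort_id)
  hence "trimmed_l1 K z = sum_list (take (CARD('m) - K) (map f js))"
    unfolding trimmed_l1_def f_def by simp
  then show ?thesis using that d s so f_def by blast
qed

lemma T_attained:
  fixes z :: "real ^ 'm"
  shows "\<exists>I. card I = CARD('m) - K \<and> trimmed_l1 K z = sum (\<lambda>i. \<bar>z$i\<bar>) I"
proof -
  obtain js where js: "distinct js" "set js = UNIV" "sorted (map (\<lambda>i. \<bar>z$i\<bar>) js)"
    "trimmed_l1 K z = sum_list (take (CARD('m) - K) (map (\<lambda>i. \<bar>z$i\<bar>) js))"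
    using T_repr by blast
  have len: "length js = CARD('m)" using js(1,2) by (metis distinct_card)
  let ?J = "set (take (CARD('m) - K) js)"
  have "card ?J = CARD('m) - K" using js(1) len by (simp add: distinct_card)
  moreover have "trimmed_l1 K z = sum (\<lambda>i. \<bar>z$i\<bar>) ?J"
    using js(4) js(1) by (simp add: take_map sum_list_distinct_conv_sum_set)
  ultimately show ?thesis by blast
qed

lemma T_le:
  fixes z :: "real ^ 'm"
  assumes "card I = CARD('m) - K"
  shows "trimmed_l1 K z \<le> sum (\<lambda>i. \<bar>z$i\<bar>) I"
proof -
  define f where "f = (\<lambda>i. \<bar>z$i\<bar>)"
  obtain js where js: "distinct js" "set js = UNIV" "sorted (map f js)"
    "trimmed_l1 K z = sum_list (take (CARD('m) - K) (map f js))"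
    using T_repr[of z K, folded f_def] by blast
  have len: "length js = CARD('m)" using js(1,2) by (metis distinct_card)
  define k where "k = CARD('m) - K"
  define J where "J = set (take k js)"
  have cJ: "card J = k" using js(1) len unfolding J_def k_def by (simp add: distinct_card)
  have TJ: "trimmed_l1 K z = sum f J"
    using js(4) js(1) unfolding J_def k_def by (simp add: take_map sum_list_distinct_conv_sum_set)
  have key: "f j \<le> f i" if jJ: "j \<in> J" and iJ: "i \<notin> J" for i j
  proof -
    obtain p where p: "p < length (take k js)" "take k js ! p = j" using jJ unfolding J_def in_set_conv_nth by blast
    have pk: "p < k" "p < length js" using p(1) by auto
    have jp: "js ! p = j" using p pk by simp
    obtain q where q: "q < length js" "js ! q = i" using js(2) UNIV_I in_set_conv_nth by metis
    have "\<not> q < k"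
    proof
      assume "q < k"
      hence "i \<in> set (take k js)" unfolding in_set_conv_nth using q pk by (intro exI[of _ q]) auto
      thus False using iJ J_def by simp
    qed
    hence "p \<le> q" using pk by simp
    hence "(map f js) ! p \<le> (map f js) ! q" using js(3) q(1) by (intro sorted_nth_mono) auto
    thus ?thesis using jp q pk by simp
  qed
  have fin: "finite I" "finite J" by auto
  have "card (J - I) = card (I - J)"
  proof -
    have "card (J - I) = card J - card (J \<inter> I)" by (rule card_Diff_subset_Int) (simp add: fin)
    also have "\<dots> = card I - card (I \<inter> J)" using cJ assms k_def by (simp add: inf.commute[of J I])
    also have "\<dots> = card (I - J)" by (rule card_Diff_subset_Int[symmetric]) (simp add: fin)
    finally show ?thesis .
  qed
  then obtain g where g: "bij_betw g (J - I) (I - J)" using finite_same_card_bij[of "J - I" "I - J"] fin by auto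
  have "sum f (J - I) \<le> sum (f \<circ> g) (J - I)"
  proof (rule sum_mono)
    fix j assume "j \<in> J - I"
    hence "g j \<notin> J" "j \<in> J" using g bij_betwE by fastforce+
    thus "f j \<le> (f \<circ> g) j" using key by simp
  qed
  also have "\<dots> = sum f (I - J)" using sum.reindex_bij_betw[OF g] by simp
  finally have "sum f (J - I) \<le> sum f (I - J)" .
  moreover have "sum f J = sum f (J \<inter> I) + sum f (J - I)" by (metis fin(2) sum.Int_Diff)
  moreover have "sum f I = sum f (I \<inter> J) + sum f (I - J)" by (metis fin(1) sum.Int_Diff)
  ultimately show ?thesis using TJ f_def by (simp add: inf.commute[of J I])
qed



lemma norm_sq_expand:
  fixes b x d :: "'a::real_inner"
  shows "(norm (b - (x + t *\<^sub>R d)))^2 = (norm (b - x))^2 + 2 * t * inner (x - b) d + t^2 * (norm d)^2"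
  unfolding power2_norm_eq_inner
  by (simp add: inner_diff_left inner_diff_right inner_add_left inner_add_right algebra_simps power2_eq_square inner_commute)

lemma dir_bound:
  fixes b x d :: "real ^ 'n" and G :: "real^'n \<Rightarrow> real"
  assumes st: "d_stationary (\<lambda>x. (1/2) * (norm (b - x))^2 + \<gamma> * G x) x"
    and g: "\<gamma> \<ge> 0"
    and H: "\<And>t. 0 < t \<Longrightarrow> t < 1 \<Longrightarrow> G (x + t *\<^sub>R d) \<le> G x - t * a"
  shows "\<gamma> * a \<le> inner (x - b) d"
proof -
  define F where "F = (\<lambda>x. (1/2) * (norm (b - x))^2 + \<gamma> * G x)"
  obtain L where lim: "((\<lambda>t. (F (x + t *\<^sub>R d) - F x) / t) \<longlongrightarrow> L) (at_right 0)" and L: "L \<ge> 0"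
    using st unfolding d_stationary_def F_def by blast
  define h where "h = (\<lambda>t::real. inner (x - b) d + t * (norm d)^2 / 2 - \<gamma> * a)"
  have hlim: "(h \<longlongrightarrow> inner (x - b) d - \<gamma> * a) (at_right 0)"
  proof -
    have "(h \<longlongrightarrow> h 0) (at_right 0)" unfolding h_def by (intro tendsto_intros) auto
    thus ?thesis by (simp add: h_def)
  qed
  have ev: "eventually (\<lambda>t. (F (x + t *\<^sub>R d) - F x) / t \<le> h t) (at_right 0)"
    unfolding eventually_at_right_field
  proof (intro exI[of _ 1] conjI allI impI)
    fix t :: real assume t: "0 < t" "t < 1"
    have "F (x + t *\<^sub>R d) - F x \<le> t * inner (x - b) d + t^2 * (norm d)^2 / 2 - \<gamma> * (t * a)"
    proof -
      have "\<gamma> * G (x + t *\<^sub>R d) \<le> \<gamma> * (G x - t * a)" using H[OF t] g by (rule mult_left_mono) 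
      thus ?thesis unfolding F_def norm_sq_expand by (simp add: algebra_simps)
    qed
    also have "\<dots> = t * h t" unfolding h_def by (simp add: algebra_simps power2_eq_square)
    finally show "(F (x + t *\<^sub>R d) - F x) / t \<le> h t" using t by (simp add: divide_le_eq mult.commute)
  qed simp
  have "L \<le> inner (x - b) d - \<gamma> * a"
    by (rule tendsto_le[OF trivial_limit_at_right_real hlim lim ev])
  thus ?thesis using L by simp
qed



lemma norm_sq_add:
  fixes x y :: "'a::real_inner"
  shows "(norm (x + t *\<^sub>R y))^2 = (norm x)^2 + 2 * t * inner x y + t^2 * (norm y)^2"
  unfolding power2_norm_eq_inner
  by (simp add: inner_add_left inner_add_right algebra_simps power2_eq_square inner_commute)

lemma eig_finite:
  fixes A :: "real^'n^'n"
  assumes sym: "\<And>u v. inner (A *v u) v = inner u (A *v v)"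
  shows "finite {e. e \<noteq> 0 \<and> (\<exists>v. v \<noteq> 0 \<and> A *v v = e *\<^sub>R v)}"
proof -
  define E where "E = {e. \<exists>v. v \<noteq> 0 \<and> A *v v = e *\<^sub>R v}"
  define g where "g = (\<lambda>e. SOME v. v \<noteq> 0 \<and> A *v v = e *\<^sub>R v)"
  have gE: "g e \<noteq> 0 \<and> A *v g e = e *\<^sub>R g e" if "e \<in> E" for e
    using that unfolding E_def g_def by (metis (mono_tags, lifting) mem_Collect_eq someI_ex)
  have orth: "inner (g e1) (g e2) = 0" if "e1 \<in> E" "e2 \<in> E" "e1 \<noteq> e2" for e1 e2
  proof -
    have "e1 * inner (g e1) (g e2) = inner (A *v g e1) (g e2)" using gE[OF that(1)] by simp
    also have "\<dots> = inner (g e1) (A *v g e2)" by (rule sym)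
    also have "\<dots> = e2 * inner (g e1) (g e2)" using gE[OF that(2)] by simp
    finally show ?thesis using that(3) by simp
  qed
  have inj: "inj_on g E"
  proof (rule inj_onI)
    fix x y assume xy: "x \<in> E" "y \<in> E" "g x = g y"
    show "x = y"
    proof (rule ccontr)
      assume "x \<noteq> y"
      hence "inner (g x) (g x) = 0" using orth[OF xy(1,2)] xy(3) by simp
      thus False using gE[OF xy(1)] by simp
    qed
  qed
  have po: "pairwise orthogonal (g ` E)"
    unfolding pairwise_def orthogonal_def using orth by auto
  have z: "0 \<notin> g ` E" using gE by auto
  have "independent (g ` E)" by (rule pairwise_orthogonal_independent[OF po z])
  hence "finite (g ` E)" using independent_bound by blast
  hence "finite E" using inj finite_imageD by blast
  thus ?thesis by (rule rev_finite_subset) (auto simp: E_def)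
qed

lemma sigma_bound:
  fixes D :: "real ^'n^'m"
  assumes surj: "surj (\<lambda>x. D *v x)"
  shows "sigma_min D > 0 \<and> (\<forall>w. \<exists>d. D *v d = w \<and> sigma_min D * norm d \<le> norm w)"
proof -
  define Dt where "Dt = transpose D"
  define A where "A = transpose D ** D"
  have adj: "inner (Dt *v y) v = inner y (D *v v)" for y v
    unfolding Dt_def by (simp add: dot_lmul_matrix)
  have Aeq: "A *v v = Dt *v (D *v v)" for v unfolding A_def Dt_def by (simp add: matrix_vector_mul_assoc)
  have Ain: "inner (A *v u) v = inner (D *v u) (D *v v)" for u v
    unfolding Aeq adj by (rule refl)
  have Asym: "inner (A *v u) v = inner u (A *v v)" for u v
    using Ain[of u v] Ain[of v u] by (simp add: inner_commute)
  define R where "R = range (\<lambda>y. Dt *v y)"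
  have sub: "subspace R" unfolding subspace_def R_def
  proof (intro conjI ballI allI)
    show "0 \<in> range ((*v) Dt)" by (metis matrix_vector_mult_0_right rangeI)
    fix x y assume "x \<in> range ((*v) Dt)" "y \<in> range ((*v) Dt)"
    then obtain a b where "x = Dt *v a" "y = Dt *v b" by auto
    thus "x + y \<in> range ((*v) Dt)" by (metis matrix_vector_right_distrib rangeI)
  next
    fix c :: real and x assume "x \<in> range ((*v) Dt)"
    then obtain a where "x = Dt *v a" by auto
    thus "c *\<^sub>R x \<in> range ((*v) Dt)" by (metis matrix_vector_mult_scaleR rangeI)
  qed
  have Rin: "Dt *v y \<in> R" for y unfolding R_def by simp
  have injR: "d = 0" if dR: "d \<in> R" and dD: "D *v d = 0" for d
  proof -
    obtain y where "d = Dt *v y" using dR R_def by auto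
    hence "inner d d = inner y (D *v d)" using adj by simp
    thus ?thesis using dD by simp
  qed
  have onto: "\<exists>d\<in>R. D *v d = w" for w
  proof -
    obtain x where x: "D *v x = w" using surj by (metis surjD)
    obtain p q where pq: "p \<in> span R" "\<And>u. u \<in> span R \<Longrightarrow> orthogonal q u" "x = p + q"
      using orthogonal_subspace_decomp_exists by blast
    have sR: "span R = R" using sub by simp
    have "inner (D *v q) (D *v q) = inner (Dt *v (D *v q)) q" by (simp only: adj)
    also have "\<dots> = 0" using pq(2)[of "Dt *v (D *v q)"] sR Rin by (simp add: orthogonal_def inner_commute)
    finally have "D *v q = 0" by simp
    hence "D *v p = w" using x pq(3) by (simp add: matrix_vector_right_distrib)
    thus ?thesis using pq(1) sR by auto
  qed
  define w0 :: "real^'m" where "w0 = (\<chi> i. 1)"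
  have "w0 \<noteq> 0" unfolding w0_def by (simp add: vec_eq_iff)
  then obtain d1 where d1: "d1 \<in> R" "d1 \<noteq> 0" using onto[of w0] by (metis matrix_vector_mult_0_right)
  define S where "S = R \<inter> sphere 0 1"
  have cS: "compact S" unfolding S_def using closed_subspace[OF sub] by auto
  have neS: "(1 / norm d1) *\<^sub>R d1 \<in> S" unfolding S_def using d1 sub
    by (simp add: subspace_def)
  have cont: "continuous_on S (\<lambda>d. (norm (D *v d))^2)"
    by (intro continuous_intros linear_continuous_on) simp
  obtain d0 where d0: "d0 \<in> S" "\<And>d. d \<in> S \<Longrightarrow> (norm (D *v d0))^2 \<le> (norm (D *v d))^2"
    using continuous_attains_inf[OF cS _ cont] neS by blast
  define l where "l = (norm (D *v d0))^2"
  have d0R: "d0 \<in> R" "norm d0 = 1" using d0(1) S_def by auto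
  have lpos: "l > 0"
  proof -
    have "d0 \<noteq> 0" using d0R by auto
    hence "D *v d0 \<noteq> 0" using injR d0R by blast
    thus ?thesis unfolding l_def by simp
  qed
  have ray: "l * (norm d)^2 \<le> (norm (D *v d))^2" if "d \<in> R" for d
  proof (cases "d = 0")
    case True thus ?thesis by simp
  next
    case False
    define e where "e = (1 / norm d) *\<^sub>R d"
    have "e \<in> S" unfolding S_def e_def using that sub False by (simp add: subspace_def)
    hence "l \<le> (norm (D *v e))^2" using d0(2) l_def by simp
    also have "\<dots> = (norm (D *v d))^2 / (norm d)^2"
      unfolding e_def by (simp add: matrix_vector_mult_scaleR power_divide)
    finally show ?thesis using False by (simp add: le_divide_eq)
  qed
  define v where "v = A *v d0 - l *\<^sub>R d0"
  have vR: "v \<in> R" unfolding v_def using sub d0R Rin Aeq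
    by (metis subspace_diff subspace_def)
  define a where "a = (norm v)^2"
  define C where "C = (norm (D *v v))^2 - l * a"
  have quad: "0 \<le> 2 * t * a + t^2 * C" for t
  proof -
    have "d0 + t *\<^sub>R v \<in> R" using sub d0R vR by (simp add: subspace_def)
    hence h: "l * (norm (d0 + t *\<^sub>R v))^2 \<le> (norm (D *v d0 + t *\<^sub>R (D *v v)))^2"
    proof -
      have "D *v (d0 + t *\<^sub>R v) = D *v d0 + t *\<^sub>R (D *v v)"
        by (simp add: matrix_vector_right_distrib matrix_vector_mult_scaleR)
      thus ?thesis using ray[OF \<open>d0 + t *\<^sub>R v \<in> R\<close>] by simp
    qed
    have e1: "(norm (d0 + t *\<^sub>R v))^2 = 1 + 2 * t * inner d0 v + t^2 * a"
      unfolding a_def norm_sq_add using d0R(2) by simp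
    have e2: "(norm (D *v d0 + t *\<^sub>R (D *v v)))^2 = l + 2 * t * inner (D *v d0) (D *v v) + t^2 * (norm (D *v v))^2"
      unfolding l_def norm_sq_add by simp
    have e3: "inner (D *v d0) (D *v v) = a + l * inner d0 v"
    proof -
      have "inner (D *v d0) (D *v v) = inner (A *v d0) v" by (simp add: Ain)
      also have "A *v d0 = v + l *\<^sub>R d0" unfolding v_def by simp
      finally show ?thesis unfolding a_def power2_norm_eq_inner by (simp add: inner_add_left)
    qed
    show ?thesis using h unfolding e1 e2 e3 C_def by (simp add: algebra_simps)
  qed
  have "a = 0"
  proof (rule ccontr)
    assume an: "a \<noteq> 0"
    have ap: "a > 0" using an a_def by simp
    define s where "s = 1 / (\<bar>C\<bar> + 1)"
    have sp: "s > 0" "\<bar>C\<bar> * s < 1" unfolding s_def by (auto simp: field_simps)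
    have "0 \<le> 2 * (- a * s) * a + (- a * s)^2 * C" by (rule quad)
    also have "\<dots> = a^2 * s * (- 2 + s * C)" by (simp add: algebra_simps power2_eq_square)
    also have "\<dots> < 0"
    proof -
      have "s * C \<le> \<bar>C\<bar> * s" by (simp add: mult.commute abs_ge_self mult_right_mono sp(1) less_imp_le)
      hence "- 2 + s * C < 0" using sp by linarith
      moreover have "a^2 * s > 0" using ap sp by simp
      ultimately show ?thesis by (simp add: mult_pos_neg)
    qed
    finally show False by simp
  qed
  hence Av: "A *v d0 = l *\<^sub>R d0" using v_def a_def by simp
  define E where "E = {e. e \<noteq> 0 \<and> (\<exists>v. v \<noteq> 0 \<and> A *v v = e *\<^sub>R v)}"
  have fE: "finite E" unfolding E_def by (rule eig_finite[OF Asym])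
  have lE: "l \<in> E" unfolding E_def using Av lpos d0R by (intro CollectI conjI exI[of _ d0]) auto
  have sig: "sigma_min D = sqrt (Min E)" unfolding sigma_min_def E_def A_def by simp
  have minle: "Min E \<le> l" using fE lE by simp
  have minpos: "Min E > 0"
  proof -
    have "Min E \<in> E" using fE lE Min_in by blast
    then obtain u where u: "Min E \<noteq> 0" "u \<noteq> 0" "A *v u = Min E *\<^sub>R u" unfolding E_def by auto
    have "Min E * inner u u = inner (A *v u) u" using u(3) by simp
    also have "\<dots> = inner (D *v u) (D *v u)" by (simp add: Ain)
    finally have "Min E * inner u u \<ge> 0" by simp
    moreover have "inner u u > 0" using u(2) by simp
    ultimately have "Min E \<ge> 0" by (simp add: zero_le_mult_iff)
    thus ?thesis using u(1) by simp
  qed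
  have spos: "sigma_min D > 0" using sig minpos by simp
  have "\<exists>d. D *v d = w \<and> sigma_min D * norm d \<le> norm w" for w
  proof -
    obtain d where d: "d \<in> R" "D *v d = w" using onto by blast
    have "(sigma_min D * norm d)^2 = Min E * (norm d)^2" using sig minpos by (simp add: power_mult_distrib)
    also have "\<dots> \<le> l * (norm d)^2" using minle by (simp add: mult_right_mono)
    also have "\<dots> \<le> (norm w)^2" using ray[OF d(1)] d(2) by simp
    finally have "sigma_min D * norm d \<le> norm w" by (rule power2_le_imp_le) simp
    thus ?thesis using d by blast
  qed
  thus ?thesis using spos by blast
qed



theorem mainTheorem9:
  fixes b :: "real ^ 'n" and c :: "real ^ 'm" and D :: "real ^ 'n ^ 'm"
    and K :: nat and \<gamma> :: real and xstar xbar :: "real ^ 'n"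
  assumes "surj (\<lambda>x. D *v x)"
    and "K < CARD('m)"
    and "\<gamma> > 0"
    and "d_stationary (\<lambda>x. (1/2) * (norm (b - x))^2 + \<gamma> * trimmed_l1 K (D *v x - c)) xstar"
    and "D *v xbar = c"
    and "\<gamma> > norm (b - xbar) / sigma_min D"
  shows "trimmed_l1 K (D *v xstar - c) = 0"
proof (rule ccontr)
  assume ne: "trimmed_l1 K (D *v xstar - c) \<noteq> 0"
  define z where "z = D *v xstar - c"
  define T0 where "T0 = trimmed_l1 K z"
  define G where "G = (\<lambda>x. trimmed_l1 K (D *v x - c))"
  define u where "u = xstar - b"
  have st: "d_stationary (\<lambda>x. (1/2) * (norm (b - x))^2 + \<gamma> * G x) xstar"
    using assms(4) unfolding G_def .
  obtain I0 where I0: "card I0 = CARD('m) - K" "T0 = sum (\<lambda>i. \<bar>z$i\<bar>) I0"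
    using T_attained unfolding T0_def by blast
  have T0pos: "T0 > 0"
  proof -
    have "T0 \<ge> 0" using I0(2) by (simp add: sum_nonneg)
    thus ?thesis using ne unfolding T0_def z_def by simp
  qed
  have sumbound: "G x \<le> (1 - t) * T0" if "0 < t" "t < 1"
     "\<And>i. i \<in> I0 \<Longrightarrow> (D *v x - c) $ i = (1 - t) * z $ i" for x t
  proof -
    have "G x \<le> sum (\<lambda>i. \<bar>(D *v x - c)$i\<bar>) I0" unfolding G_def by (rule T_le[OF I0(1)])
    also have "\<dots> = sum (\<lambda>i. (1 - t) * \<bar>z$i\<bar>) I0"
      using that by (intro sum.cong) (auto simp: abs_mult)
    also have "\<dots> = (1 - t) * T0" using I0(2) by (simp add: sum_distrib_left)
    finally show ?thesis .
  qed
  have "\<gamma> * T0 \<le> inner u (xbar - xstar)" unfolding u_def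
  proof (rule dir_bound[OF st])
    show "0 \<le> \<gamma>" using assms(3) by simp
    fix t :: real assume t: "0 < t" "t < 1"
    have "D *v (xstar + t *\<^sub>R (xbar - xstar)) - c = (1 - t) *\<^sub>R z"
      unfolding z_def using assms(5)
      by (simp add: matrix_vector_right_distrib matrix_vector_mult_diff_distrib matrix_vector_mult_scaleR algebra_simps)
    hence "G (xstar + t *\<^sub>R (xbar - xstar)) \<le> (1 - t) * T0"
      using t by (intro sumbound) auto
    thus "G (xstar + t *\<^sub>R (xbar - xstar)) \<le> G xstar - t * T0"
      unfolding G_def T0_def z_def by (simp add: algebra_simps)
  qed
  moreover have "inner u (xbar - xstar) = inner u (xbar - b) - inner u u"
    unfolding u_def by (simp add: inner_diff_right)
  ultimately have "inner u u \<le> inner u (xbar - b)" using assms(3) T0pos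
    by (smt (verit) mult_pos_pos)
  also have "\<dots> \<le> norm u * norm (xbar - b)" by (rule norm_cauchy_schwarz)
  finally have "norm u * norm u \<le> norm u * norm (b - xbar)"
    by (simp add: norm_minus_commute dot_square_norm power2_eq_square)
  hence unorm: "norm u \<le> norm (b - xbar)"
    by (metis mult_le_cancel_left norm_ge_zero order.trans linorder_not_le mult_zero_left order_refl)
  define w :: "real^'m" where "w = (\<chi> i. if i \<in> I0 then - z $ i else 0)"
  obtain d where d: "D *v d = w" "sigma_min D * norm d \<le> norm w" and spos: "sigma_min D > 0"
    using sigma_bound[OF assms(1)] by blast
  have "\<gamma> * T0 \<le> inner u d" unfolding u_def
  proof (rule dir_bound[OF st])
    show "0 \<le> \<gamma>" using assms(3) by simp
    fix t :: real assume t: "0 < t" "t < 1"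
    have "D *v (xstar + t *\<^sub>R d) - c = z + t *\<^sub>R w"
      unfolding z_def using d(1)
      by (simp add: matrix_vector_right_distrib matrix_vector_mult_scaleR algebra_simps)
    hence "G (xstar + t *\<^sub>R d) \<le> (1 - t) * T0"
      using t by (intro sumbound) (auto simp: w_def algebra_simps)
    thus "G (xstar + t *\<^sub>R d) \<le> G xstar - t * T0"
      unfolding G_def T0_def z_def by (simp add: algebra_simps)
  qed
  also have "\<dots> \<le> norm u * norm d" by (rule norm_cauchy_schwarz)
  finally have g1: "\<gamma> * T0 \<le> norm u * norm d" .
  have wn: "norm w \<le> T0"
  proof -
    have "norm w \<le> sum (\<lambda>i. \<bar>w$i\<bar>) UNIV" by (rule norm_le_l1_cart)
    also have "\<dots> = sum (\<lambda>i. \<bar>z$i\<bar>) I0" unfolding w_def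
    proof -
      have "(\<Sum>i\<in>UNIV. \<bar>(\<chi> i. if i \<in> I0 then - z $ i else 0) $ i\<bar>) = (\<Sum>i\<in>UNIV. if i \<in> I0 then \<bar>z $ i\<bar> else 0)"
        by (intro sum.cong) auto
      also have "\<dots> = (\<Sum>i\<in>I0. \<bar>z $ i\<bar>)" by (simp add: sum.If_cases)
      finally show "(\<Sum>i\<in>UNIV. \<bar>(\<chi> i. if i \<in> I0 then - z $ i else 0) $ i\<bar>) = (\<Sum>i\<in>I0. \<bar>z $ i\<bar>)" .
    qed
    finally show ?thesis using I0(2) by simp
  qed
  have "sigma_min D * (\<gamma> * T0) \<le> sigma_min D * (norm u * norm d)"
    using g1 spos by simp
  also have "\<dots> = norm u * (sigma_min D * norm d)" by simp
  also have "\<dots> \<le> norm u * norm w" using d(2) by (simp add: mult_left_mono)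
  also have "\<dots> \<le> norm (b - xbar) * T0" using unorm wn by (simp add: mult_mono)
  finally have "sigma_min D * \<gamma> \<le> norm (b - xbar)" using T0pos by (simp add: mult.assoc[symmetric])
  hence "\<gamma> \<le> norm (b - xbar) / sigma_min D" using spos by (simp add: le_divide_eq mult.commute)
  thus False using assms(6) by simp
qed

end
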